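(* Let $\mathcal{R}$ be a right amenable cell space with finite stabiliser $G_0$, and let $(\mathcal{R},Q,N,\delta)$ be a semi-cellular automaton with $Q$ finite and nonempty and $N$ finite, whose global transition function $\Delta$ is not surjective. Then there is a Garden of Eden pattern with nonempty finite domain, i.e. a nonempty finite $F\subseteq M$ and $p\colon F\to Q$ such that $\Delta(c)|_F\neq p$ for every $c\in Q^M$.
   Context: A cell space $\mathcal{R}$ consists of a group $G$ acting transitively on the left on a nonempty set $M$ via $\triangleright$, a point $m_0\in M$ and a family $(g_{m_0,m})_{m\in M}$ in $G$ with $g_{m_0,m}\triangleright m_0=m$. $G_0$ is the stabiliser of $m_0$, $G/G_0$ the set of left cosets, with $G$ acting by $g\cdot hG_0=ghG_0$. The right semi-action $\triangleleft\colon M\times G/G_0\to M$ is $m\triangleleft gG_0=g_{m_0,m}g\triangleright m_0$. $\mathcal{R}$ is right amenable if there is a finitely additive probability measure $\mu$ on the power set of $M$ such that $\mu(\{a\triangleleft\mathfrak{g}:a\in A\})=\mu(A)$ whenever $\mathfrak{g}\in G/G_0$, $A\subseteq M$ and $m\mapsto m\triangleleft\mathfrak{g}$ is injective on $A$. A semi-cellular automaton is $(\mathcal{R},Q,N,\delta)$ with $Q$ a set, $N\subseteq G/G_0$ with $G_0\cdot N\subseteq N$, $\delta\colon Q^N\to Q$; its global transition function is $\Delta(c)(m)=\delta(n\mapsto c(m\triangleleft n))$. *)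

theory Defs
  imports Complex_Main "HOL-Algebra.Group_Action" "HOL-Library.FuncSet"
begin

definition cell_space ::
  "('g, 'b) monoid_scheme \<Rightarrow> 'm set \<Rightarrow> ('g \<Rightarrow> 'm \<Rightarrow> 'm) \<Rightarrow> 'm \<Rightarrow> ('m \<Rightarrow> 'g) \<Rightarrow> bool" where
  "cell_space G M act m0 gm \<longleftrightarrow>
     transitive_action G M act \<and> m0 \<in> M \<and>
     (\<forall>m\<in>M. gm m \<in> carrier G \<and> act (gm m) m0 = m)"

definition stab0 :: "('g, 'b) monoid_scheme \<Rightarrow> ('g \<Rightarrow> 'm \<Rightarrow> 'm) \<Rightarrow> 'm \<Rightarrow> 'g set" where
  "stab0 G act m0 = stabilizer G act m0"

definition left_cosets :: "('g, 'b) monoid_scheme \<Rightarrow> 'g set \<Rightarrow> 'g set set" where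
  "left_cosets G H = {g <#\<^bsub>G\<^esub> H | g. g \<in> carrier G}"

definition coset_act :: "('g, 'b) monoid_scheme \<Rightarrow> 'g \<Rightarrow> 'g set \<Rightarrow> 'g set" where
  "coset_act G g C = g <#\<^bsub>G\<^esub> C"

text \<open>Right semi-action m \<triangleleft> gG0 = g_{m0,m} g \<triangleright> m0 (independent of the representative g).\<close>
definition rsemi ::
  "('g, 'b) monoid_scheme \<Rightarrow> ('g \<Rightarrow> 'm \<Rightarrow> 'm) \<Rightarrow> 'm \<Rightarrow> ('m \<Rightarrow> 'g) \<Rightarrow> 'm \<Rightarrow> 'g set \<Rightarrow> 'm" where
  "rsemi G act m0 gm m C =
     act (gm m \<otimes>\<^bsub>G\<^esub> (SOME g. g \<in> carrier G \<and> C = g <#\<^bsub>G\<^esub> stab0 G act m0)) m0"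

definition right_amenable ::
  "('g, 'b) monoid_scheme \<Rightarrow> 'm set \<Rightarrow> ('g \<Rightarrow> 'm \<Rightarrow> 'm) \<Rightarrow> 'm \<Rightarrow> ('m \<Rightarrow> 'g) \<Rightarrow> bool" where
  "right_amenable G M act m0 gm \<longleftrightarrow>
     (\<exists>\<mu> :: 'm set \<Rightarrow> real.
        (\<forall>A. A \<subseteq> M \<longrightarrow> 0 \<le> \<mu> A) \<and>
        \<mu> M = 1 \<and>
        (\<forall>A B. A \<subseteq> M \<longrightarrow> B \<subseteq> M \<longrightarrow> A \<inter> B = {} \<longrightarrow> \<mu> (A \<union> B) = \<mu> A + \<mu> B) \<and>
        (\<forall>C \<in> left_cosets G (stab0 G act m0). \<forall>A. A \<subseteq> M \<longrightarrow>
            inj_on (\<lambda>m. rsemi G act m0 gm m C) A \<longrightarrow>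
            \<mu> ((\<lambda>a. rsemi G act m0 gm a C) ` A) = \<mu> A))"

text \<open>Semi-cellular automaton (R, Q, N, delta); configurations and local maps are
  extensional functions on their domains.\<close>
definition semi_cellular_automaton ::
  "('g, 'b) monoid_scheme \<Rightarrow> 'm set \<Rightarrow> ('g \<Rightarrow> 'm \<Rightarrow> 'm) \<Rightarrow> 'm \<Rightarrow> ('m \<Rightarrow> 'g)
    \<Rightarrow> 'q set \<Rightarrow> 'g set set \<Rightarrow> (('g set \<Rightarrow> 'q) \<Rightarrow> 'q) \<Rightarrow> bool" where
  "semi_cellular_automaton G M act m0 gm Q N \<delta> \<longleftrightarrow>
     cell_space G M act m0 gm \<and>
     N \<subseteq> left_cosets G (stab0 G act m0) \<and>
     (\<forall>g0 \<in> stab0 G act m0. \<forall>n \<in> N. coset_act G g0 n \<in> N) \<and>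
     (\<forall>f \<in> N \<rightarrow>\<^sub>E Q. \<delta> f \<in> Q)"

definition global_trans ::
  "('g, 'b) monoid_scheme \<Rightarrow> 'm set \<Rightarrow> ('g \<Rightarrow> 'm \<Rightarrow> 'm) \<Rightarrow> 'm \<Rightarrow> ('m \<Rightarrow> 'g)
    \<Rightarrow> 'g set set \<Rightarrow> (('g set \<Rightarrow> 'q) \<Rightarrow> 'q) \<Rightarrow> ('m \<Rightarrow> 'q) \<Rightarrow> ('m \<Rightarrow> 'q)" where
  "global_trans G M act m0 gm N \<delta> c =
     (\<lambda>m\<in>M. \<delta> (\<lambda>n\<in>N. c (rsemi G act m0 gm m n)))"

end

theory Submission
  imports Defs "HOL-Analysis.Analysis"
begin

lemma rsemi_in_M:
  assumes cs: "cell_space G M act m0 gm" and m: "m \<in> M"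
    and n: "n \<in> left_cosets G (stab0 G act m0)"
  shows "rsemi G act m0 gm m n \<in> M"
proof -
  have ta: "transitive_action G M act" and m0: "m0 \<in> M"
    and gmc: "gm m \<in> carrier G"
    using cs m unfolding cell_space_def by auto
  then interpret transitive_action G M act by simp
  obtain g where g: "g \<in> carrier G" "n = g <#\<^bsub>G\<^esub> stab0 G act m0"
    using n unfolding left_cosets_def by auto
  let ?s = "SOME g. g \<in> carrier G \<and> n = g <#\<^bsub>G\<^esub> stab0 G act m0"
  have "?s \<in> carrier G \<and> n = ?s <#\<^bsub>G\<^esub> stab0 G act m0"
    by (rule someI[of _ g]) (use g in auto)
  moreover have "group G" using ta unfolding transitive_action_def group_action_def group_hom_def by auto
  ultimately have "gm m \<otimes>\<^bsub>G\<^esub> ?s \<in> carrier G" using gmc by (simp add: monoid.m_closed group.is_monoid)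
  then show ?thesis unfolding rsemi_def using m0 element_image by blast
qed

theorem lemma10:
  fixes G :: "('g, 'b) monoid_scheme" and M :: "'m set" and act :: "'g \<Rightarrow> 'm \<Rightarrow> 'm"
    and m0 :: 'm and gm :: "'m \<Rightarrow> 'g"
    and Q :: "'q set" and N :: "'g set set" and \<delta> :: "('g set \<Rightarrow> 'q) \<Rightarrow> 'q"
  assumes "cell_space G M act m0 gm"
    and "right_amenable G M act m0 gm"
    and "finite (stab0 G act m0)"
    and "semi_cellular_automaton G M act m0 gm Q N \<delta>"
    and "finite Q" and "Q \<noteq> {}" and "finite N"
    and "\<not> (global_trans G M act m0 gm N \<delta> ` (M \<rightarrow>\<^sub>E Q) = (M \<rightarrow>\<^sub>E Q))"
  shows "\<exists>F p. F \<subseteq> M \<and> F \<noteq> {} \<and> finite F \<and> p \<in> F \<rightarrow>\<^sub>E Q \<and>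
           (\<forall>c \<in> M \<rightarrow>\<^sub>E Q. restrict (global_trans G M act m0 gm N \<delta> c) F \<noteq> p)"
proof (rule ccontr)
  assume H0: "\<not> ?thesis"
  let ?D = "global_trans G M act m0 gm N \<delta>"
  let ?r = "rsemi G act m0 gm"
  have cs: "cell_space G M act m0 gm" using assms(1) .
  have m0M: "m0 \<in> M" using cs unfolding cell_space_def by auto
  have Nsub: "N \<subseteq> left_cosets G (stab0 G act m0)"
    and dQ: "\<forall>f \<in> N \<rightarrow>\<^sub>E Q. \<delta> f \<in> Q"
    using assms(4) unfolding semi_cellular_automaton_def by auto
  have rM: "\<And>m n. m \<in> M \<Longrightarrow> n \<in> N \<Longrightarrow> ?r m n \<in> M"
    using rsemi_in_M[OF cs] Nsub by blast
  have phiQ: "(\<lambda>n\<in>N. c (?r m n)) \<in> N \<rightarrow>\<^sub>E Q" if "c \<in> M \<rightarrow>\<^sub>E Q" "m \<in> M" for c m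
    using that rM by auto
  have Dm: "?D c m = \<delta> (\<lambda>n\<in>N. c (?r m n))" if "m \<in> M" for c m
    using that unfolding global_trans_def by simp
  have Dimg: "?D c \<in> M \<rightarrow>\<^sub>E Q" if "c \<in> M \<rightarrow>\<^sub>E Q" for c
    using that dQ phiQ unfolding global_trans_def by auto
  then obtain d where dM: "d \<in> M \<rightarrow>\<^sub>E Q" and dn: "d \<notin> ?D ` (M \<rightarrow>\<^sub>E Q)"
    using assms(8) by blast
  have H: "\<exists>c \<in> M \<rightarrow>\<^sub>E Q. restrict (?D c) F = p"
    if "F \<subseteq> M" "F \<noteq> {}" "finite F" "p \<in> F \<rightarrow>\<^sub>E Q" for F p
    using H0 that by blast
  define X where "X = product_topology (\<lambda>_. discrete_topology Q) M"
  have topX: "topspace X = M \<rightarrow>\<^sub>E Q" unfolding X_def by simp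
  have compX: "compact_space X"
    unfolding X_def compact_space_product_topology
    using assms(5) compact_space_discrete_topology by blast
  define K where "K m = {c \<in> topspace X. ?D c m = d m}" for m
  define Y where "Y = product_topology (\<lambda>_. discrete_topology Q) N"
  have topY: "topspace Y = N \<rightarrow>\<^sub>E Q" unfolding Y_def by simp
  have t1Y: "t1_space Y" unfolding Y_def t1_space_product_topology
    by (simp add: Hausdorff_imp_t1_space)
  have closedK: "closedin X (K m)" if m: "m \<in> M" for m
  proof -
    define P where "P = {f \<in> N \<rightarrow>\<^sub>E Q. \<delta> f = d m}"
    have "finite P" unfolding P_def using assms(5,7) finite_PiE by (rule_tac finite_subset) auto
    then have cP: "closedin Y P" using t1Y topY unfolding t1_space_closedin_finite P_def by auto
    have cont: "continuous_map X Y (\<lambda>c. \<lambda>n\<in>N. c (?r m n))"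
      unfolding Y_def continuous_map_componentwise
    proof (intro conjI ballI)
      show "(\<lambda>c. \<lambda>n\<in>N. c (?r m n)) ` topspace X \<subseteq> extensional N" by auto
      fix n assume n: "n \<in> N"
      have "continuous_map X (discrete_topology Q) (\<lambda>c. c (?r m n))"
        unfolding X_def using rM[OF m n] by (rule continuous_map_product_projection)
      then show "continuous_map X (discrete_topology Q) (\<lambda>c. (\<lambda>n\<in>N. c (?r m n)) n)"
        using n by simp
    qed
    have "K m = {c \<in> topspace X. (\<lambda>n\<in>N. c (?r m n)) \<in> P}"
      unfolding K_def P_def using phiQ m topX Dm by auto
    then show ?thesis using closedin_continuous_map_preimage[OF cont cP] by simp
  qed
  have fip: "\<Inter>\<F> \<noteq> {}" if fF: "finite \<F>" "\<F> \<subseteq> K ` M" for \<F>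
  proof -
    obtain F where F: "F \<subseteq> M" "finite F" "\<F> = K ` F"
      using finite_subset_image[OF fF] by blast
    show ?thesis
    proof (cases "F = {}")
      case True then show ?thesis using F by simp
    next
      case False
      have "restrict d F \<in> F \<rightarrow>\<^sub>E Q" using dM F by auto
      then obtain c where c: "c \<in> M \<rightarrow>\<^sub>E Q" "restrict (?D c) F = restrict d F"
        using H[OF F(1) False F(2)] by blast
      have "c \<in> K m" if "m \<in> F" for m
      proof -
        have "restrict (?D c) F m = restrict d F m" using c by simp
        then have "?D c m = d m" using that by simp
        then show ?thesis unfolding K_def using c topX by auto
      qed
      then show ?thesis using F by blast
    qed
  qed
  have "\<Inter>(K ` M) \<noteq> {}"
    using compX[unfolded compact_space_fip, rule_format, of "K ` M"] closedK fip by blast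
  then obtain c where c: "\<And>m. m \<in> M \<Longrightarrow> c \<in> K m" by blast
  have cX: "c \<in> M \<rightarrow>\<^sub>E Q" using c[OF m0M] topX unfolding K_def by auto
  have "?D c = d"
  proof (rule PiE_ext[OF Dimg[OF cX] dM])
    fix m assume "m \<in> M" then show "?D c m = d m" using c unfolding K_def by auto
  qed
  then show False using dn cX by blast
qed

end
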